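(* Let $(x,y)$ be a vertex of the convex hull of the set of feasible solutions of a CKFLU instance with $m=|D|$ clients. Let $G=(V,E)$ be its associated bipartite graph and $H=(\bar V,\bar E)$ its untight subgraph. Then: (a) $G$ is acyclic; (b) each connected component of $H$ contains at most one facility $i\in F\cap\bar V$ with $0<\sum_{j\in D}x_{ij}<s$; (c) $H$ contains at most $m$ facilities and at most $2m-1$ edges.
   Context: An instance of the capacitated $k$-facility location problem with uniform capacities (CKFLU) consists of a finite set $F$ of facilities with opening costs $f_i\ge 0$, a finite set $D$ of clients with integer demands $d_j\ge 0$, unit service costs $c_{ij}\ge 0$ ($i\in F$, $j\in D$), a common positive integer capacity $s$, and an integer $k\ge1$. A feasible solution is $(x,y)$ with $x_{ij}\ge 0$, $y\in\{0,1\}^F$, $\sum_{i\in F}x_{ij}=d_j$ for all $j\in D$, $\sum_{j\in D}x_{ij}\le s\,y_i$ for all $i\in F$, and $\sum_{i\in F}y_i\le k$. For a feasible solution $(x,y)$, its associated bipartite graph is $G=(V,E)$ with $V=\{i\in F: y_i=1\}\cup D$ and $E=\{\{i,j\}: i\in F,\ j\in D,\ x_{ij}>0\}$, edge $\{i,j\}$ having weight $x_{ij}$. Its untight subgraph is $H=(\bar V,\bar E)$ where $\bar E=\{\{i,j\}\in E: 0<x_{ij}<s\}$ and $\bar V=\bigcup_{e\in\bar E}e$. *)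

theory Defs
  imports "HOL-Analysis.Analysis"
begin

text \<open>CKFLU instance with facility set = UNIV of finite type 'f and client set
  = UNIV of finite type 'd; demands d (nonnegative integers), uniform capacity s,
  bound k.\<close>

definition ckflu_feasible ::
  "('d \<Rightarrow> nat) \<Rightarrow> nat \<Rightarrow> nat \<Rightarrow> ((real^('f::finite \<times> 'd::finite)) \<times> (real^'f)) set" where
  "ckflu_feasible d s k =
     {(x, y). (\<forall>i j. x $ (i, j) \<ge> 0)
            \<and> (\<forall>i. y $ i = 0 \<or> y $ i = 1)
            \<and> (\<forall>j. (\<Sum>i\<in>UNIV. x $ (i, j)) = real (d j))
            \<and> (\<forall>i. (\<Sum>j\<in>UNIV. x $ (i, j)) \<le> real s * y $ i)
            \<and> (\<Sum>i\<in>UNIV. y $ i) \<le> real k}"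

definition assoc_edges :: "real^('f::finite \<times> 'd::finite) \<Rightarrow> ('f \<times> 'd) set" where
  "assoc_edges x = {(i, j). x $ (i, j) > 0}"

definition untight_edges :: "nat \<Rightarrow> real^('f::finite \<times> 'd::finite) \<Rightarrow> ('f \<times> 'd) set" where
  "untight_edges s x = {(i, j). 0 < x $ (i, j) \<and> x $ (i, j) < real s}"

definition bip_adj :: "('f \<times> 'd) set \<Rightarrow> ('f + 'd) \<Rightarrow> ('f + 'd) \<Rightarrow> bool" where
  "bip_adj E u v = (\<exists>i j. (i, j) \<in> E \<and>
      ((u = Inl i \<and> v = Inr j) \<or> (u = Inr j \<and> v = Inl i)))"

definition bip_acyclic :: "('f \<times> 'd) set \<Rightarrow> bool" where
  "bip_acyclic E = (\<not> (\<exists>vs. length vs \<ge> 3 \<and> distinct vs \<and>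
      (\<forall>t < length vs. bip_adj E (vs ! t) (vs ! ((t + 1) mod length vs)))))"

definition bip_connected :: "('f \<times> 'd) set \<Rightarrow> ('f + 'd) \<Rightarrow> ('f + 'd) \<Rightarrow> bool" where
  "bip_connected E u v = ((u, v) \<in> {(a, b). bip_adj E a b}\<^sup>*)"

end

theory Submission
  imports Defs
begin

lemma feas_pert:
  fixes x :: "real^('f::finite \<times> 'd::finite)" and y :: "real^'f" and w :: "'f\<times>'d \<Rightarrow> real"
  assumes feas: "(x,y) \<in> ckflu_feasible d s k"
    and wcl: "\<forall>j. (\<Sum>i\<in>UNIV. w (i,j)) = 0"
    and c: "\<bar>c\<bar> \<le> 1" and ep: "eps > 0"
    and bx: "\<forall>e. eps * \<bar>w e\<bar> \<le> x $ e"
    and bf: "\<forall>i. (\<Sum>j\<in>UNIV. w (i,j)) \<noteq> 0 \<longrightarrow> y $ i = 1 \<and>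
               eps * \<bar>\<Sum>j\<in>UNIV. w (i,j)\<bar> \<le> real s - (\<Sum>j\<in>UNIV. x $ (i,j))"
  shows "(x + (\<chi> e. c * eps * w e), y) \<in> ckflu_feasible d s k"
proof -
  have f: "\<forall>i j. x $ (i, j) \<ge> 0" "\<forall>i. y $ i = 0 \<or> y $ i = 1"
    "\<forall>j. (\<Sum>i\<in>UNIV. x $ (i, j)) = real (d j)"
    "\<forall>i. (\<Sum>j\<in>UNIV. x $ (i, j)) \<le> real s * y $ i"
    "(\<Sum>i\<in>UNIV. y $ i) \<le> real k" using feas by (auto simp: ckflu_feasible_def)
  have nn: "x $ e + c * eps * w e \<ge> 0" for e
  proof -
    have "\<bar>c * eps * w e\<bar> \<le> eps * \<bar>w e\<bar>"
      using c ep mult_left_le_one_le[of "\<bar>w e\<bar>" "\<bar>c\<bar>"] by (simp add: abs_mult)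
    then show ?thesis using bx[rule_format, of e] by linarith
  qed
  have cl: "(\<Sum>i\<in>UNIV. x $ (i, j) + c * eps * w (i,j)) = real (d j)" for j
    using f(3) wcl by (simp add: sum.distrib sum_distrib_left[symmetric])
  have fa: "(\<Sum>j\<in>UNIV. x $ (i, j) + c * eps * w (i,j)) \<le> real s * y $ i" for i
  proof (cases "(\<Sum>j\<in>UNIV. w (i,j)) = 0")
    case True then show ?thesis using f(4) by (simp add: sum.distrib sum_distrib_left[symmetric])
  next
    case False
    have "\<bar>c * eps * (\<Sum>j\<in>UNIV. w (i,j))\<bar> \<le> eps * \<bar>\<Sum>j\<in>UNIV. w (i,j)\<bar>"
      using c ep mult_left_le_one_le[of "\<bar>\<Sum>j\<in>UNIV. w (i,j)\<bar>" "\<bar>c\<bar>"] by (simp add: abs_mult)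
    moreover have "(\<Sum>j\<in>UNIV. x $ (i, j) + c * eps * w (i,j)) = (\<Sum>j\<in>UNIV. x $ (i, j)) + c * eps * (\<Sum>j\<in>UNIV. w (i,j))"
      by (simp add: sum.distrib sum_distrib_left)
    ultimately show ?thesis using bf[rule_format, OF False] by (simp add: abs_le_iff)
  qed
  show ?thesis using nn cl fa f(2,5) by (simp add: ckflu_feasible_def)
qed


lemma perturb_zero:
  fixes x :: "real^('f::finite \<times> 'd::finite)" and y :: "real^'f" and w :: "'f\<times>'d \<Rightarrow> real"
  assumes ext: "(x,y) extreme_point_of (convex hull (ckflu_feasible d s k))"
    and wpos: "\<forall>e. w e \<noteq> 0 \<longrightarrow> x $ e > 0"
    and wcl: "\<forall>j. (\<Sum>i\<in>UNIV. w (i,j)) = 0"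
    and wfa: "\<forall>i. (\<Sum>j\<in>UNIV. w (i,j)) \<noteq> 0 \<longrightarrow> (\<Sum>j\<in>UNIV. x $ (i,j)) < real s \<and> y $ i = 1"
  shows "w e0 = 0"
proof (rule ccontr)
  assume w0: "w e0 \<noteq> 0"
  have feas: "(x,y) \<in> ckflu_feasible d s k" using extreme_point_of_convex_hull[OF ext] .
  have x0: "\<forall>e. x $ e \<ge> 0" using feas by (auto simp: ckflu_feasible_def)
  define sw where "sw i = (\<Sum>j\<in>UNIV. w (i,j))" for i
  define A where "A = (\<lambda>e. x$e / \<bar>w e\<bar>) ` {e. w e \<noteq> 0}"
  define B where "B = (\<lambda>i. (real s - (\<Sum>j\<in>UNIV. x $ (i,j))) / \<bar>sw i\<bar>) ` {i. sw i \<noteq> 0}"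
  define eps where "eps = Min (A \<union> B)"
  have finAB: "finite (A \<union> B)" unfolding A_def B_def by simp
  have neAB: "A \<union> B \<noteq> {}" using w0 unfolding A_def by (cases e0) auto
  have posAB: "\<forall>a\<in>A \<union> B. a > 0"
    unfolding A_def B_def using wpos wfa by (auto simp: sw_def)
  have ep: "eps > 0" unfolding eps_def using finAB neAB posAB by (simp add: Min_gr_iff)
  have bx: "\<forall>e. eps * \<bar>w e\<bar> \<le> x $ e"
  proof
    fix e show "eps * \<bar>w e\<bar> \<le> x $ e"
    proof (cases "w e = 0")
      case True then show ?thesis using x0 by (cases e) simp
    next
      case False
      then have "eps \<le> x$e / \<bar>w e\<bar>" unfolding eps_def A_def using finAB by (intro Min_le) auto
      then show ?thesis using False by (simp add: pos_le_divide_eq mult.commute)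
    qed
  qed
  have bf: "\<forall>i. (\<Sum>j\<in>UNIV. w (i,j)) \<noteq> 0 \<longrightarrow> y $ i = 1 \<and>
               eps * \<bar>\<Sum>j\<in>UNIV. w (i,j)\<bar> \<le> real s - (\<Sum>j\<in>UNIV. x $ (i,j))"
  proof (intro allI impI conjI)
    fix i assume h: "(\<Sum>j\<in>UNIV. w (i,j)) \<noteq> 0"
    then show "y $ i = 1" using wfa by auto
    have "eps \<le> (real s - (\<Sum>j\<in>UNIV. x $ (i,j))) / \<bar>sw i\<bar>"
      unfolding eps_def B_def using finAB h by (intro Min_le) (auto simp: sw_def)
    then show "eps * \<bar>\<Sum>j\<in>UNIV. w (i,j)\<bar> \<le> real s - (\<Sum>j\<in>UNIV. x $ (i,j))"
      using h by (simp add: pos_le_divide_eq mult.commute sw_def)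
  qed
  define p1 where "p1 = (x + (\<chi> e. 1 * eps * w e), y)"
  define p2 where "p2 = (x + (\<chi> e. (-1) * eps * w e), y)"
  have p1: "p1 \<in> convex hull (ckflu_feasible d s k)"
    unfolding p1_def by (rule hull_inc, rule feas_pert[OF feas wcl _ ep bx bf]) simp
  have p2: "p2 \<in> convex hull (ckflu_feasible d s k)"
    unfolding p2_def by (rule hull_inc, rule feas_pert[OF feas wcl _ ep bx bf]) simp
  have ne: "p1 \<noteq> p2"
  proof
    assume "p1 = p2"
    then have "(x + (\<chi> e. 1 * eps * w e)) $ e0 = (x + (\<chi> e. (-1) * eps * w e)) $ e0"
      unfolding p1_def p2_def by simp
    then show False using w0 ep by simp
  qed
  have mid: "midpoint p1 p2 = (x,y)"
    unfolding p1_def p2_def midpoint_def by (simp add: vec_eq_iff algebra_simps)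
  have "(x,y) \<in> open_segment p1 p2" using ne mid midpoint_in_open_segment by metis
  then show False using ext p1 p2 unfolding extreme_point_of_def by blast
qed


fun ep :: "('f + 'd) \<Rightarrow> ('f + 'd) \<Rightarrow> 'f \<times> 'd" where
  "ep (Inl i) (Inr j) = (i, j)"
| "ep (Inr j) (Inl i) = (i, j)"
| "ep _ _ = undefined"

lemma adj_sym: "bip_adj E u v = bip_adj E v u"
  unfolding bip_adj_def by blast

lemma adj_ep_in: "bip_adj E u v \<Longrightarrow> ep u v \<in> E"
  unfolding bip_adj_def by auto

lemma adj_isl: "bip_adj E u v \<Longrightarrow> isl u \<noteq> isl v"
  unfolding bip_adj_def by auto

lemma adj_ep_snd: "bip_adj E u v \<Longrightarrow> (snd (ep u v) = j) = (u = Inr j \<or> v = Inr j)"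
  unfolding bip_adj_def by auto

lemma adj_ep_fst: "bip_adj E u v \<Longrightarrow> (fst (ep u v) = i) = (u = Inl i \<or> v = Inl i)"
  unfolding bip_adj_def by auto

lemma adj_ep_inj: "bip_adj E u v \<Longrightarrow> bip_adj E' u' v' \<Longrightarrow> ep u v = ep u' v' \<Longrightarrow>
   (u = u' \<and> v = v') \<or> (u = v' \<and> v = u')"
  unfolding bip_adj_def by auto

definition wsum :: "nat \<Rightarrow> (nat \<Rightarrow> 'f + 'd) \<Rightarrow> (nat \<Rightarrow> 'f + 'd) \<Rightarrow> 'f \<times> 'd \<Rightarrow> real" where
  "wsum n a b e = (\<Sum>t<n. if ep (a t) (b t) = e then (-1::real) ^ t else 0)"

lemma wsum_cl:
  fixes a b :: "nat \<Rightarrow> 'f::finite + 'd::finite"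
  assumes "\<forall>t<n. bip_adj E (a t) (b t)"
  shows "(\<Sum>i\<in>UNIV. wsum n a b (i,j)) = (\<Sum>t<n. if a t = Inr j \<or> b t = Inr j then (-1::real)^t else 0)"
proof -
  have "(\<Sum>i\<in>UNIV. wsum n a b (i,j)) = (\<Sum>t<n. \<Sum>i\<in>UNIV. if ep (a t) (b t) = (i,j) then (-1::real) ^ t else 0)"
    unfolding wsum_def by (rule sum.swap)
  also have "\<dots> = (\<Sum>t<n. if a t = Inr j \<or> b t = Inr j then (-1::real)^t else 0)"
  proof (rule sum.cong[OF refl])
    fix t assume t: "t \<in> {..<n}"
    have "(\<Sum>i\<in>UNIV. if ep (a t) (b t) = (i,j) then (-1::real) ^ t else 0)
       = (\<Sum>i\<in>UNIV. if fst (ep (a t) (b t)) = i then (if snd (ep (a t) (b t)) = j then (-1::real) ^ t else 0) else 0)"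
      by (rule sum.cong) (auto simp: prod_eq_iff)
    also have "\<dots> = (if snd (ep (a t) (b t)) = j then (-1::real) ^ t else 0)" by simp
    finally show "(\<Sum>i\<in>UNIV. if ep (a t) (b t) = (i,j) then (-1::real) ^ t else 0) =
       (if a t = Inr j \<or> b t = Inr j then (-1::real)^t else 0)"
      using adj_ep_snd[of E "a t" "b t" j] assms t by auto
  qed
  finally show ?thesis .
qed

lemma wsum_fa:
  fixes a b :: "nat \<Rightarrow> 'f::finite + 'd::finite"
  assumes "\<forall>t<n. bip_adj E (a t) (b t)"
  shows "(\<Sum>j\<in>UNIV. wsum n a b (i,j)) = (\<Sum>t<n. if a t = Inl i \<or> b t = Inl i then (-1::real)^t else 0)"
proof -
  have "(\<Sum>j\<in>UNIV. wsum n a b (i,j)) = (\<Sum>t<n. \<Sum>j\<in>UNIV. if ep (a t) (b t) = (i,j) then (-1::real) ^ t else 0)"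
    unfolding wsum_def by (rule sum.swap)
  also have "\<dots> = (\<Sum>t<n. if a t = Inl i \<or> b t = Inl i then (-1::real)^t else 0)"
  proof (rule sum.cong[OF refl])
    fix t assume t: "t \<in> {..<n}"
    have "(\<Sum>j\<in>UNIV. if ep (a t) (b t) = (i,j) then (-1::real) ^ t else 0)
       = (\<Sum>j\<in>UNIV. if snd (ep (a t) (b t)) = j then (if fst (ep (a t) (b t)) = i then (-1::real) ^ t else 0) else 0)"
      by (rule sum.cong) (auto simp: prod_eq_iff)
    also have "\<dots> = (if fst (ep (a t) (b t)) = i then (-1::real) ^ t else 0)" by simp
    finally show "(\<Sum>j\<in>UNIV. if ep (a t) (b t) = (i,j) then (-1::real) ^ t else 0) =
       (if a t = Inl i \<or> b t = Inl i then (-1::real)^t else 0)"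
      using adj_ep_fst[of E "a t" "b t" i] assms t by auto
  qed
  finally show ?thesis .
qed

lemma wsum_supp:
  assumes "\<forall>t<n. bip_adj E (a t) (b t)" and "wsum n a b e \<noteq> 0"
  shows "e \<in> E"
proof -
  have "\<exists>t\<in>{..<n}. (if ep (a t) (b t) = e then (-1::real)^t else 0) \<noteq> 0"
  proof (rule ccontr)
    assume "\<not> (\<exists>t\<in>{..<n}. (if ep (a t) (b t) = e then (-1::real)^t else 0) \<noteq> 0)"
    then have "wsum n a b e = 0" unfolding wsum_def by (intro sum.neutral) blast
    with assms(2) show False by simp
  qed
  then obtain t where "t < n" "ep (a t) (b t) = e" by (auto split: if_splits)
  then show ?thesis using assms(1) adj_ep_in by metis
qed

lemma wsum_first:
  assumes "0 < n" and "\<forall>t<n. ep (a t) (b t) = ep (a 0) (b 0) \<longrightarrow> t = 0"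
  shows "wsum n a b (ep (a 0) (b 0)) = 1"
proof -
  have "wsum n a b (ep (a 0) (b 0)) = (\<Sum>t<n. if t = 0 then (-1::real) ^ t else 0)"
    unfolding wsum_def using assms(2) by (intro sum.cong) auto
  also have "\<dots> = 1" using assms(1) by simp
  finally show ?thesis .
qed

lemma sum_two:
  fixes f :: "nat \<Rightarrow> real"
  assumes "{t\<in>{..<n}. P t} = {k1, k2}" "k1 \<noteq> k2"
  shows "(\<Sum>t<n. if P t then f t else 0) = f k1 + f k2"
proof -
  have "(\<Sum>t<n. if P t then f t else 0) = sum f {t\<in>{..<n}. P t}"
    using sum.inter_filter[of "{..<n}" f P] by simp
  then show ?thesis using assms by simp
qed

lemma sum_none:
  fixes f :: "nat \<Rightarrow> real"
  assumes "\<forall>t<n. \<not> P t"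
  shows "(\<Sum>t<n. if P t then f t else 0) = 0"
  using assms by (intro sum.neutral) auto


lemma mod_suc_lt: "t < (n::nat) \<Longrightarrow> (t+1) mod n = (if t+1 = n then 0 else t+1)"
  by (cases "t+1 = n") auto

lemma cycle_even:
  assumes adj: "\<forall>t<n. bip_adj E (vs!t) (vs!((t+1) mod n))" and n: "n = length vs" "n \<ge> 3"
  shows "even n"
proof -
  have par: "t < n \<Longrightarrow> isl (vs!t) = (isl (vs!0) = even t)" for t
  proof (induction t)
    case 0 then show ?case by simp
  next
    case (Suc t)
    then have "bip_adj E (vs!t) (vs!(Suc t))" using adj mod_suc_lt[of t n] by (metis Suc_eq_plus1 Suc_lessD less_not_refl)
    then have "isl (vs!t) \<noteq> isl (vs!Suc t)" by (rule adj_isl)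
    then show ?case using Suc by auto
  qed
  have "n - 1 + 1 = n" using n by simp
  then have "(n - 1 + 1) mod n = 0" by simp
  then have "bip_adj E (vs!(n-1)) (vs!0)" using adj[rule_format, of "n-1"] n by simp
  then have "isl (vs!(n-1)) \<noteq> isl (vs!0)" by (rule adj_isl)
  moreover have "n - 1 < n" using n by simp
  ultimately have "\<not> even (n-1)" using par[of "n-1"] by auto
  then show ?thesis using n by auto
qed

lemma cycle_sum:
  fixes vs :: "('f + 'd) list"
  assumes adj: "\<forall>t<n. bip_adj E (vs!t) (vs!((t+1) mod n))" and n: "n = length vs" "n \<ge> 3"
    and dist: "distinct vs"
  shows "(\<Sum>t<n. if vs!t = v \<or> vs!((t+1) mod n) = v then (-1::real)^t else 0) = 0"
proof (cases "v \<in> set vs")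
  case False
  have "\<forall>t<n. \<not> (vs!t = v \<or> vs!((t+1) mod n) = v)"
  proof (intro allI impI)
    fix t assume t: "t < n"
    have "(t+1) mod n < n" using n by (intro mod_less_divisor) auto
    then have "(t+1) mod n < length vs" using n by simp
    then show "\<not> (vs!t = v \<or> vs!((t+1) mod n) = v)"
      using False nth_mem[of t vs] nth_mem[of "(t+1) mod n" vs] t n by auto
  qed
  then show ?thesis by (rule sum_none)
next
  case True
  then obtain k where k: "k < n" "vs!k = v" using n by (auto simp: in_set_conv_nth)
  define k' where "k' = (if k = 0 then n - 1 else k - 1)"
  have k'n: "k' < n" using k n unfolding k'_def by auto
  have set: "{t\<in>{..<n}. vs!t = v \<or> vs!((t+1) mod n) = v} = {k, k'}"
  proof (rule set_eqI, rule iffI)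
    fix t assume "t \<in> {t\<in>{..<n}. vs!t = v \<or> vs!((t+1) mod n) = v}"
    then have t: "t < n" "vs!t = vs!k \<or> vs!((t+1) mod n) = vs!k" using k by auto
    have tm: "(t+1) mod n < n" using n by (intro mod_less_divisor) auto
    from t(2) have "t = k \<or> (t+1) mod n = k"
      using dist t(1) tm k(1) n(1) by (auto simp: nth_eq_iff_index_eq)
    then show "t \<in> {k, k'}" using t(1) k(1) mod_suc_lt[of t n] unfolding k'_def by (auto split: if_splits)
  next
    fix t assume "t \<in> {k, k'}"
    then have "t = k \<or> t = k'" by simp
    moreover have "vs!((k'+1) mod n) = v"
      using k n mod_suc_lt[of k' n] k'n unfolding k'_def by (auto split: if_splits)
    ultimately show "t \<in> {t\<in>{..<n}. vs!t = v \<or> vs!((t+1) mod n) = v}" using k k'n by auto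
  qed
  have ne: "k \<noteq> k'" using n k unfolding k'_def by auto
  have ev: "even n" by (rule cycle_even[OF adj n])
  have "(\<Sum>t<n. if vs!t = v \<or> vs!((t+1) mod n) = v then (-1::real)^t else 0) = (-1)^k + (-1)^k'"
    by (rule sum_two[OF set ne])
  also have "\<dots> = 0"
  proof (cases "k = 0")
    case True
    have "odd (n-1)" using ev n by auto
    then show ?thesis using True unfolding k'_def by simp
  next
    case False
    then obtain m where "k = Suc m" by (cases k) auto
    then show ?thesis unfolding k'_def by simp
  qed
  finally show ?thesis .
qed

lemma cycle_edge_inj:
  assumes adj: "\<forall>t<n. bip_adj E (vs!t) (vs!((t+1) mod n))" and n: "n = length vs" "n \<ge> 3"
    and dist: "distinct vs" and t: "t < n" "t' < n"
    and eq: "ep (vs!t) (vs!((t+1) mod n)) = ep (vs!t') (vs!((t'+1) mod n))"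
  shows "t = t'"
proof -
  have m: "(t+1) mod n < n" "(t'+1) mod n < n" using n by (auto intro: mod_less_divisor)
  from adj_ep_inj[OF adj[rule_format, OF t(1)] adj[rule_format, OF t(2)] eq]
  have "(t = t' \<and> (t+1) mod n = (t'+1) mod n) \<or> (t = (t'+1) mod n \<and> (t+1) mod n = t')"
    using dist t m n(1) by (auto simp: nth_eq_iff_index_eq)
  then show ?thesis using mod_suc_lt[of t n] mod_suc_lt[of t' n] t n(2) by (auto split: if_splits)
qed

lemma part_a:
  fixes x :: "real^('f::finite \<times> 'd::finite)" and y :: "real^'f"
  assumes ext: "(x,y) extreme_point_of (convex hull (ckflu_feasible d s k))"
  shows "bip_acyclic (assoc_edges x)"
  unfolding bip_acyclic_def
proof
  assume "\<exists>vs. length vs \<ge> 3 \<and> distinct vs \<and>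
      (\<forall>t < length vs. bip_adj (assoc_edges x) (vs ! t) (vs ! ((t + 1) mod length vs)))"
  then obtain vs where vs: "length vs \<ge> 3" "distinct vs"
    "\<forall>t < length vs. bip_adj (assoc_edges x) (vs ! t) (vs ! ((t + 1) mod length vs))" by blast
  define n where "n = length vs"
  have adj: "\<forall>t<n. bip_adj (assoc_edges x) ((\<lambda>t. vs!t) t) ((\<lambda>t. vs!((t+1) mod n)) t)"
    using vs(3) n_def by simp
  have n3: "n \<ge> 3" using vs n_def by simp
  define w where "w = wsum n (\<lambda>t. vs!t) (\<lambda>t. vs!((t+1) mod n))"
  have wpos: "\<forall>e. w e \<noteq> 0 \<longrightarrow> x $ e > 0"
  proof (intro allI impI)
    fix e assume "w e \<noteq> 0"
    then have "e \<in> assoc_edges x" unfolding w_def by (rule wsum_supp[OF adj])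
    then show "x $ e > 0" unfolding assoc_edges_def by (cases e) auto
  qed
  have cs: "(\<Sum>t<n. if vs!t = v \<or> vs!((t+1) mod n) = v then (-1::real)^t else 0) = 0" for v
    using cycle_sum[OF _ n_def n3 vs(2)] vs(3) n_def by simp
  have wcl: "\<forall>j. (\<Sum>i\<in>UNIV. w (i,j)) = 0"
    unfolding w_def using wsum_cl[OF adj] cs by simp
  have wfa: "\<forall>i. (\<Sum>j\<in>UNIV. w (i,j)) \<noteq> 0 \<longrightarrow> (\<Sum>j\<in>UNIV. x $ (i,j)) < real s \<and> y $ i = 1"
    unfolding w_def using wsum_fa[OF adj] cs by simp
  have z: "w (ep (vs!0) (vs!((0+1) mod n))) = 0"
    by (rule perturb_zero[OF ext wpos wcl wfa])
  have "w (ep ((\<lambda>t. vs!t) 0) ((\<lambda>t. vs!((t+1) mod n)) 0)) = 1"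
    unfolding w_def
  proof (rule wsum_first)
    show "0 < n" using n3 by simp
    show "\<forall>t<n. ep (vs!t) (vs!((t+1) mod n)) = ep (vs!0) (vs!((0+1) mod n)) \<longrightarrow> t = 0"
      using cycle_edge_inj[OF _ n_def n3 vs(2)] vs(3) n_def n3 by (metis (no_types, lifting) gr0I less_le_trans zero_less_numeral)
  qed
  with z show False by simp
qed


lemma rtrancl_path:
  assumes "(a,b) \<in> R\<^sup>*"
  shows "\<exists>ps. ps \<noteq> [] \<and> ps!0 = a \<and> ps!(length ps - 1) = b \<and> distinct ps \<and>
           (\<forall>t. t+1 < length ps \<longrightarrow> (ps!t, ps!(t+1)) \<in> R)"
  using assms
proof (induction rule: rtrancl_induct)
  case base show ?case by (intro exI[of _ "[a]"]) auto
next
  case (step b c)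
  then obtain ps where ps: "ps \<noteq> []" "ps!0 = a" "ps!(length ps - 1) = b" "distinct ps"
    "\<forall>t. t+1 < length ps \<longrightarrow> (ps!t, ps!(t+1)) \<in> R" by blast
  show ?case
  proof (cases "c \<in> set ps")
    case True
    then obtain k where k: "k < length ps" "ps!k = c" by (auto simp: in_set_conv_nth)
    show ?thesis
    proof (intro exI[of _ "take (Suc k) ps"] conjI allI impI)
      show "take (Suc k) ps \<noteq> []" using ps(1) by simp
      show "take (Suc k) ps ! 0 = a" using ps(2) by simp
      show "take (Suc k) ps ! (length (take (Suc k) ps) - 1) = c" using k by simp
      show "distinct (take (Suc k) ps)" using ps(4) by simp
      fix t assume "t + 1 < length (take (Suc k) ps)"
      then show "(take (Suc k) ps ! t, take (Suc k) ps ! (t + 1)) \<in> R" using ps(5) k by simp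
    qed
  next
    case False
    show ?thesis
    proof (intro exI[of _ "ps @ [c]"] conjI allI impI)
      show "ps @ [c] \<noteq> []" by simp
      show "(ps @ [c]) ! 0 = a" using ps(1,2) by (simp add: nth_append)
      show "(ps @ [c]) ! (length (ps @ [c]) - 1) = c" by simp
      show "distinct (ps @ [c])" using ps(4) False by simp
      fix t assume t: "t + 1 < length (ps @ [c])"
      show "((ps @ [c]) ! t, (ps @ [c]) ! (t + 1)) \<in> R"
      proof (cases "t + 1 < length ps")
        case True then show ?thesis using ps(5) by (simp add: nth_append)
      next
        case False
        then have "t = length ps - 1" "t + 1 = length ps" using t by auto
        then show ?thesis using ps(3) step(2) by (simp add: nth_append)
      qed
    qed
  qed
qed

lemma path_sum:
  fixes ps :: "('f + 'd) list"
  assumes L: "length ps \<ge> 2" and dist: "distinct ps"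
    and v: "v \<noteq> ps!0" "v \<noteq> ps!(length ps - 1)"
  shows "(\<Sum>t<length ps - 1. if ps!t = v \<or> ps!(t+1) = v then (-1::real)^t else 0) = 0"
proof (cases "v \<in> set ps")
  case False
  have "\<forall>t<length ps - 1. \<not> (ps!t = v \<or> ps!(t+1) = v)"
  proof (intro allI impI)
    fix t assume t: "t < length ps - 1"
    then show "\<not> (ps!t = v \<or> ps!(t+1) = v)"
      using False nth_mem[of t ps] nth_mem[of "t+1" ps] by auto
  qed
  then show ?thesis by (rule sum_none)
next
  case True
  then obtain k where k: "k < length ps" "ps!k = v" by (auto simp: in_set_conv_nth)
  have k0: "k \<noteq> 0" using k v by (cases k) auto
  have kL: "k \<noteq> length ps - 1" using k v by auto
  have set: "{t\<in>{..<length ps - 1}. ps!t = v \<or> ps!(t+1) = v} = {k - 1, k}"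
  proof (rule set_eqI, rule iffI)
    fix t assume "t \<in> {t\<in>{..<length ps - 1}. ps!t = v \<or> ps!(t+1) = v}"
    then have t: "t < length ps - 1" "ps!t = ps!k \<or> ps!(t+1) = ps!k" using k by auto
    then have "t = k \<or> t + 1 = k" using dist k(1) by (auto simp: nth_eq_iff_index_eq)
    then show "t \<in> {k - 1, k}" by auto
  next
    fix t assume "t \<in> {k - 1, k}"
    then show "t \<in> {t\<in>{..<length ps - 1}. ps!t = v \<or> ps!(t+1) = v}"
      using k k0 kL by auto
  qed
  have ne: "k - 1 \<noteq> k" using k0 by simp
  have "(\<Sum>t<length ps - 1. if ps!t = v \<or> ps!(t+1) = v then (-1::real)^t else 0) = (-1)^(k-1) + (-1)^k"
    by (rule sum_two[OF set ne])
  also have "\<dots> = 0"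
  proof -
    obtain m where "k = Suc m" using k0 by (cases k) auto
    then show ?thesis by simp
  qed
  finally show ?thesis .
qed

lemma path_edge_inj:
  assumes adj: "\<forall>t<length ps - 1. bip_adj E (ps!t) (ps!(t+1))"
    and dist: "distinct ps" and t: "t < length ps - 1" "t' < length ps - 1"
    and eq: "ep (ps!t) (ps!(t+1)) = ep (ps!t') (ps!(t'+1))"
  shows "t = t'"
proof -
  from adj_ep_inj[OF adj[rule_format, OF t(1)] adj[rule_format, OF t(2)] eq]
  have "(t = t' \<and> t+1 = t'+1) \<or> (t = t'+1 \<and> t+1 = t')"
    using dist t by (auto simp: nth_eq_iff_index_eq)
  then show ?thesis by auto
qed

lemma frac_y:
  assumes feas: "(x,y) \<in> ckflu_feasible d s k" and "0 < (\<Sum>j\<in>UNIV. x $ (i, j))"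
  shows "y $ i = 1"
proof -
  have "y $ i = 0 \<or> y $ i = 1" "(\<Sum>j\<in>UNIV. x $ (i, j)) \<le> real s * y $ i"
    using feas by (auto simp: ckflu_feasible_def)
  then show ?thesis using assms(2) by auto
qed

lemma part_b:
  fixes x :: "real^('f::finite \<times> 'd::finite)" and y :: "real^'f"
  assumes ext: "(x,y) extreme_point_of (convex hull (ckflu_feasible d s k))"
    and ne: "i1 \<noteq> i2"
    and l1: "0 < (\<Sum>j\<in>UNIV. x $ (i1, j))" "(\<Sum>j\<in>UNIV. x $ (i1, j)) < real s"
    and l2: "0 < (\<Sum>j\<in>UNIV. x $ (i2, j))" "(\<Sum>j\<in>UNIV. x $ (i2, j)) < real s"
    and con: "bip_connected (untight_edges s x) (Inl i1) (Inl i2)"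
  shows False
proof -
  have feas: "(x,y) \<in> ckflu_feasible d s k" using extreme_point_of_convex_hull[OF ext] .
  obtain ps where ps: "ps \<noteq> []" "ps!0 = Inl i1" "ps!(length ps - 1) = Inl i2" "distinct ps"
    "\<forall>t. t+1 < length ps \<longrightarrow> bip_adj (untight_edges s x) (ps!t) (ps!(t+1))"
    using rtrancl_path[OF con[unfolded bip_connected_def]] by auto
  have L: "length ps \<ge> 2"
  proof (rule ccontr)
    assume "\<not> length ps \<ge> 2"
    then have "length ps = 1" using ps(1) by (cases ps) (auto simp: not_le)
    then show False using ps(2,3) ne by simp
  qed
  define n where "n = length ps - 1"
  have adj: "\<forall>t<n. bip_adj (untight_edges s x) ((\<lambda>t. ps!t) t) ((\<lambda>t. ps!(t+1)) t)"
    using ps(5) n_def by auto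
  define w where "w = wsum n (\<lambda>t. ps!t) (\<lambda>t. ps!(t+1))"
  have wpos: "\<forall>e. w e \<noteq> 0 \<longrightarrow> x $ e > 0"
  proof (intro allI impI)
    fix e assume "w e \<noteq> 0"
    then have "e \<in> untight_edges s x" unfolding w_def by (rule wsum_supp[OF adj])
    then show "x $ e > 0" unfolding untight_edges_def by (cases e) auto
  qed
  have ps0: "(\<Sum>t<n. if ps!t = v \<or> ps!(t+1) = v then (-1::real)^t else 0) = 0"
    if "v \<noteq> Inl i1" "v \<noteq> Inl i2" for v
    using path_sum[OF L ps(4), of v] that ps(2,3) n_def by simp
  have wcl: "\<forall>j. (\<Sum>i\<in>UNIV. w (i,j)) = 0"
    unfolding w_def using wsum_cl[OF adj] ps0 by simp
  have wfa: "\<forall>i. (\<Sum>j\<in>UNIV. w (i,j)) \<noteq> 0 \<longrightarrow> (\<Sum>j\<in>UNIV. x $ (i,j)) < real s \<and> y $ i = 1"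
  proof (intro allI impI)
    fix i assume h: "(\<Sum>j\<in>UNIV. w (i,j)) \<noteq> 0"
    have "i = i1 \<or> i = i2"
    proof (rule ccontr)
      assume "\<not> (i = i1 \<or> i = i2)"
      then have "(\<Sum>j\<in>UNIV. w (i,j)) = 0" unfolding w_def using wsum_fa[OF adj] ps0[of "Inl i"] by simp
      with h show False by simp
    qed
    then show "(\<Sum>j\<in>UNIV. x $ (i,j)) < real s \<and> y $ i = 1"
      using l1 l2 frac_y[OF feas] by auto
  qed
  have z: "w (ep (ps!0) (ps!(0+1))) = 0"
    by (rule perturb_zero[OF ext wpos wcl wfa])
  have "w (ep ((\<lambda>t. ps!t) 0) ((\<lambda>t. ps!(t+1)) 0)) = 1"
    unfolding w_def
  proof (rule wsum_first)
    show "0 < n" using L n_def by simp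
    show "\<forall>t<n. ep (ps!t) (ps!(t+1)) = ep (ps!0) (ps!(0+1)) \<longrightarrow> t = 0"
    proof (intro allI impI)
      fix t assume t: "t < n" and e: "ep (ps!t) (ps!(t+1)) = ep (ps!0) (ps!(0+1))"
      show "t = 0"
        by (rule path_edge_inj[of ps "untight_edges s x", OF _ ps(4) _ _ e]) (use adj n_def t L in auto)
    qed
  qed
  with z show False by simp
qed


fun walk :: "('a \<Rightarrow> 'a \<Rightarrow> 'a) \<Rightarrow> 'a \<times> 'a \<Rightarrow> nat \<Rightarrow> 'a \<times> 'a" where
  "walk f st 0 = st"
| "walk f st (Suc n) = (snd (walk f st n), f (fst (walk f st n)) (snd (walk f st n)))"

lemma leaf_exists:
  fixes E :: "('f::finite \<times> 'd::finite) set"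
  assumes acyc: "bip_acyclic E" and ne: "E \<noteq> {}"
  shows "\<exists>v. (\<exists>w. bip_adj E v w) \<and> (\<forall>w w'. bip_adj E v w \<and> bip_adj E v w' \<longrightarrow> w = w')"
proof (rule ccontr)
  assume "\<not> ?thesis"
  then have two: "\<forall>v. (\<exists>w. bip_adj E v w) \<longrightarrow> (\<forall>p. \<exists>q. bip_adj E v q \<and> q \<noteq> p)" by metis
  obtain i j where ij: "(i,j) \<in> E" using ne by auto
  define nxt where "nxt p v = (SOME q. bip_adj E v q \<and> q \<noteq> p)" for p v
  have nxt: "bip_adj E p v \<Longrightarrow> bip_adj E v (nxt p v) \<and> nxt p v \<noteq> p" for p v
  proof -
    assume "bip_adj E p v"
    then have "\<exists>w. bip_adj E v w" using adj_sym by metis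
    then have "\<exists>q. bip_adj E v q \<and> q \<noteq> p" using two by blast
    then show ?thesis unfolding nxt_def by (rule someI_ex)
  qed
  define W where "W = walk nxt (Inl i, Inr j)"
  have inv: "bip_adj E (fst (W n)) (snd (W n))" for n
  proof (induction n)
    case 0 show ?case unfolding W_def using ij by (simp add: bip_adj_def)
  next
    case (Suc n) then show ?case unfolding W_def using nxt by simp
  qed
  define vv where "vv n = fst (W n)" for n
  have snd_W: "snd (W n) = vv (Suc n)" for n unfolding vv_def W_def by simp
  have adjv: "bip_adj E (vv n) (vv (Suc n))" for n using inv[of n] snd_W vv_def by simp
  have bk: "vv (Suc (Suc n)) \<noteq> vv n" for n
  proof -
    have "vv (Suc (Suc n)) = nxt (vv n) (vv (Suc n))" unfolding vv_def W_def by simp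
    then show ?thesis using nxt[OF adjv[of n]] by simp
  qed
  have "\<not> inj vv"
  proof
    assume "inj vv"
    then have "finite (UNIV :: nat set)" using finite_imageD[of vv UNIV] by simp
    then show False by simp
  qed
  then obtain a b where ab0: "a \<noteq> b" "vv a = vv b" unfolding inj_def by blast
  then have "\<exists>b. \<exists>a<b. vv a = vv b" by (metis linorder_neq_iff)
  define b0 where "b0 = (LEAST b. \<exists>a<b. vv a = vv b)"
  have "\<exists>a<b0. vv a = vv b0" unfolding b0_def by (rule LeastI_ex) fact
  then obtain a0 where a0: "a0 < b0" "vv a0 = vv b0" by blast
  have minb: "\<And>p q. p < q \<Longrightarrow> q < b0 \<Longrightarrow> vv p \<noteq> vv q"
    using not_less_Least b0_def by blast
  define vs where "vs = map vv [a0..<b0]"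
  define m where "m = b0 - a0"
  have lm: "length vs = m" unfolding vs_def m_def by simp
  have vsn: "t < m \<Longrightarrow> vs!t = vv (a0 + t)" for t unfolding vs_def m_def by simp
  have "inj_on vv {a0..<b0}"
    by (rule inj_onI) (metis atLeastLessThan_iff linorder_neq_iff minb)
  then have dist: "distinct vs" unfolding vs_def by (simp add: distinct_map)
  have m3: "m \<ge> 3"
  proof -
    have "m \<noteq> 1"
    proof
      assume "m = 1" then have "b0 = Suc a0" unfolding m_def using a0 by simp
      then have "isl (vv a0) = isl (vv (Suc a0))" using a0 by simp
      then show False using adj_isl[OF adjv[of a0]] by simp
    qed
    moreover have "m \<noteq> 2"
    proof
      assume "m = 2" then have "b0 = Suc (Suc a0)" unfolding m_def using a0 by simp
      then show False using a0 bk[of a0] by simp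
    qed
    moreover have "m \<noteq> 0" unfolding m_def using a0 by simp
    ultimately show ?thesis by linarith
  qed
  have cyc: "\<forall>t < length vs. bip_adj E (vs ! t) (vs ! ((t + 1) mod length vs))"
  proof (intro allI impI)
    fix t assume t: "t < length vs"
    show "bip_adj E (vs ! t) (vs ! ((t + 1) mod length vs))"
    proof (cases "t + 1 = m")
      case True
      then have "(t+1) mod length vs = 0" using lm by simp
      moreover have "Suc (a0 + t) = b0" using True m_def a0 by simp
      moreover have "vs ! 0 = vv b0" using vsn[of 0] m3 a0 by simp
      ultimately have "vs ! ((t+1) mod length vs) = vv (Suc (a0 + t))" by simp
      then show ?thesis using vsn[of t] t lm adjv[of "a0+t"] by simp
    next
      case False
      then have "(t+1) mod length vs = t + 1" using lm t by simp
      then show ?thesis using vsn[of t] vsn[of "t+1"] t lm False adjv[of "a0+t"] by simp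
    qed
  qed
  show False using acyc dist cyc m3 lm unfolding bip_acyclic_def by blast
qed


definition VV :: "('f \<times> 'd) set \<Rightarrow> ('f + 'd) set" where
  "VV E = Inl ` fst ` E \<union> Inr ` snd ` E"

definition HH1 :: "('f \<times> 'd) set \<Rightarrow> ('f + 'd) set \<Rightarrow> bool" where
  "HH1 E S = (\<forall>i\<in>fst`E. Inl i \<notin> S \<longrightarrow> (\<exists>j1 j2. j1 \<noteq> j2 \<and> (i,j1)\<in>E \<and> (i,j2)\<in>E))"

definition HH2 :: "('f \<times> 'd) set \<Rightarrow> ('f + 'd) set \<Rightarrow> bool" where
  "HH2 E S = (\<forall>a b. a\<in>S \<longrightarrow> b\<in>S \<longrightarrow> a \<in> VV E \<longrightarrow> b \<in> VV E \<longrightarrow> bip_connected E a b \<longrightarrow> a = b)"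

definition cA :: "('f \<times> 'd) set \<Rightarrow> ('f + 'd) set \<Rightarrow> bool" where
  "cA E S = (card (fst`E) + card (snd`E \<inter> {j. Inr j \<in> S}) \<le> card (snd`E))"

definition cB :: "('f \<times> 'd) set \<Rightarrow> ('f + 'd) set \<Rightarrow> bool" where
  "cB E S = (card E + card (fst`E \<inter> {i. Inl i \<in> S}) + 2 * card (snd`E \<inter> {j. Inr j \<in> S}) \<le> 2 * card (snd`E))"

lemma adj_mono: "E' \<subseteq> E \<Longrightarrow> bip_adj E' a b \<Longrightarrow> bip_adj E a b"
  unfolding bip_adj_def by blast

lemma conn_mono: 
  assumes sub: "E' \<subseteq> E" and c: "bip_connected E' a b" shows "bip_connected E a b"
proof -
  have "{(a,b). bip_adj E' a b} \<subseteq> {(a,b). bip_adj E a b}" using adj_mono[OF sub] by blast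
  then have "{(a,b). bip_adj E' a b}\<^sup>* \<subseteq> {(a,b). bip_adj E a b}\<^sup>*" by (rule rtrancl_mono)
  then show ?thesis using c unfolding bip_connected_def by blast
qed

lemma conn_sym: "bip_connected E a b \<Longrightarrow> bip_connected E b a"
proof -
  have c: "{(a, b). bip_adj E a b}\<inverse> = {(a, b). bip_adj E a b}" using adj_sym by fast
  assume "bip_connected E a b"
  then have "(b, a) \<in> ({(a, b). bip_adj E a b}\<inverse>)\<^sup>*" unfolding bip_connected_def
    by (simp add: rtrancl_converse)
  then show ?thesis unfolding bip_connected_def c .
qed

lemma conn_edge: "(u,j) \<in> E \<Longrightarrow> bip_connected E (Inl u) (Inr j)"
  unfolding bip_connected_def by (rule r_into_rtrancl) (auto simp: bip_adj_def)

lemma conn_trans: "bip_connected E a b \<Longrightarrow> bip_connected E b c \<Longrightarrow> bip_connected E a c"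
  unfolding bip_connected_def by (rule rtrancl_trans)

lemma acyc_mono: 
  assumes sub: "E' \<subseteq> E" and a: "bip_acyclic E" shows "bip_acyclic E'"
  unfolding bip_acyclic_def
proof
  assume "\<exists>vs. length vs \<ge> 3 \<and> distinct vs \<and>
      (\<forall>t < length vs. bip_adj E' (vs ! t) (vs ! ((t + 1) mod length vs)))"
  then obtain vs where "length vs \<ge> 3" "distinct vs"
      "\<forall>t < length vs. bip_adj E' (vs ! t) (vs ! ((t + 1) mod length vs))" by blast
  then have "\<forall>t < length vs. bip_adj E (vs ! t) (vs ! ((t + 1) mod length vs))"
    using adj_mono[OF sub] by blast
  then show False using a \<open>length vs \<ge> 3\<close> \<open>distinct vs\<close> unfolding bip_acyclic_def by blast
qed

lemma VV_mono: "E' \<subseteq> E \<Longrightarrow> VV E' \<subseteq> VV E"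
  unfolding VV_def by auto

lemma HH2_mono: 
  assumes h: "HH2 E S" and sub: "E' \<subseteq> E" shows "HH2 E' S"
  unfolding HH2_def
proof (intro allI impI)
  fix a b assume "a \<in> S" "b \<in> S" "a \<in> VV E'" "b \<in> VV E'" "bip_connected E' a b"
  then show "a = b" using h conn_mono[OF sub] VV_mono[OF sub] unfolding HH2_def by blast
qed

lemma HH2_swap:
  assumes h: "HH2 E S" and sub: "E' \<subseteq> E" and a0: "a0 \<in> S" "a0 \<in> VV E" "a0 \<notin> VV E'"
    and b0: "b0 \<in> VV E'" and c: "bip_connected E a0 b0"
  shows "HH2 E' ((S - {a0}) \<union> {b0})"
  unfolding HH2_def
proof (intro allI impI)
  fix a b assume as: "a \<in> (S - {a0}) \<union> {b0}" and bs: "b \<in> (S - {a0}) \<union> {b0}"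
    and av: "a \<in> VV E'" and bv: "b \<in> VV E'" and ab: "bip_connected E' a b"
  have abE: "bip_connected E a b" using conn_mono[OF sub ab] .
  have avE: "a \<in> VV E" and bvE: "b \<in> VV E" using av bv VV_mono[OF sub] by auto
  show "a = b"
  proof (cases "a = b0")
    case True
    show ?thesis
    proof (cases "b = b0")
      case False
      then have "b \<in> S" using bs by auto
      have "bip_connected E b0 b" using abE True by simp
      then have "bip_connected E a0 b" using conn_trans c by blast
      then have "a0 = b" using h a0 \<open>b \<in> S\<close> bvE unfolding HH2_def by blast
      then show ?thesis using bv a0(3) by simp
    qed (use True in simp)
  next
    case False
    then have "a \<in> S" using as by auto
    show ?thesis
    proof (cases "b = b0")
      case True
      have "bip_connected E a b0" using abE True by simp
      then have "bip_connected E a a0" using conn_trans conn_sym[OF c] by blast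
      then have "a = a0" using h a0 \<open>a \<in> S\<close> avE unfolding HH2_def by blast
      then show ?thesis using av a0(3) by simp
    next
      case False
      then have "b \<in> S" using bs by auto
      then show ?thesis using h \<open>a \<in> S\<close> avE bvE abE unfolding HH2_def by blast
    qed
  qed
qed


lemma card_rm: "finite A \<Longrightarrow> x \<in> A \<Longrightarrow> card A = card (A - {x}) + 1"
  using card_Suc_Diff1 by fastforce

lemma snd_rm:
  assumes "(a2,b) \<in> E" "a2 \<noteq> a" shows "snd ` (E - {(a,b)}) = snd ` E"
proof
  show "snd ` (E - {(a,b)}) \<subseteq> snd ` E" by auto
  show "snd ` E \<subseteq> snd ` (E - {(a,b)})"
  proof
    fix c assume "c \<in> snd ` E"
    then obtain a' where a': "(a',c) \<in> E" by force
    show "c \<in> snd ` (E - {(a,b)})"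
    proof (cases "c = b")
      case True
      then have "(a2,c) \<in> E - {(a,b)}" using assms by auto
      then show ?thesis by force
    next
      case False
      then have "(a',c) \<in> E - {(a,b)}" using a' by auto
      then show ?thesis by force
    qed
  qed
qed

lemma fst_rm:
  assumes "(a,b2) \<in> E" "b2 \<noteq> b" shows "fst ` (E - {(a,b)}) = fst ` E"
proof
  show "fst ` (E - {(a,b)}) \<subseteq> fst ` E" by auto
  show "fst ` E \<subseteq> fst ` (E - {(a,b)})"
  proof
    fix c assume "c \<in> fst ` E"
    then obtain b' where b': "(c,b') \<in> E" by force
    show "c \<in> fst ` (E - {(a,b)})"
    proof (cases "c = a")
      case True
      then have "(c,b2) \<in> E - {(a,b)}" using assms by auto
      then show ?thesis by force
    next
      case False
      then have "(c,b') \<in> E - {(a,b)}" using b' by auto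
      then show ?thesis by force
    qed
  qed
qed

lemma count_main:
  fixes E :: "('f::finite \<times> 'd::finite) set"
  assumes "bip_acyclic E" "HH1 E S" "HH2 E S"
  shows "cA E S \<and> cB E S"
  using assms
proof (induction "card E" arbitrary: E S rule: less_induct)
  case less
  have IH: "cA E' S' \<and> cB E' S'" if "E' \<subset> E" "HH1 E' S'" "HH2 E' S'" for E' S'
  proof -
    have "card E' < card E" using that(1) by (rule psubset_card_mono[rotated]) simp
    moreover have "bip_acyclic E'" using acyc_mono[OF _ less.prems(1)] that(1) by blast
    ultimately show ?thesis using less.hyps that by blast
  qed
  show ?case
  proof (cases "E = {}")
    case True then show ?thesis by (simp add: cA_def cB_def)
  next
    case False
    obtain v where v: "\<exists>w. bip_adj E v w" "\<forall>w w'. bip_adj E v w \<and> bip_adj E v w' \<longrightarrow> w = w'"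
      using leaf_exists[OF less.prems(1) False] by blast
    obtain u j where uj: "(u,j) \<in> E"
      and lf: "(\<forall>j'. (u,j')\<in>E \<longrightarrow> j'=j) \<or> (\<forall>u'. (u',j)\<in>E \<longrightarrow> u'=u)"
    proof (cases v)
      case (Inl u)
      from v(1) obtain w where "bip_adj E (Inl u) w" using Inl by auto
      then obtain j where j: "w = Inr j" "(u,j) \<in> E" unfolding bip_adj_def by auto
      have "\<forall>j'. (u,j')\<in>E \<longrightarrow> j'=j"
      proof (intro allI impI)
        fix j' assume "(u,j') \<in> E"
        then have "bip_adj E (Inl u) (Inr j')" "bip_adj E (Inl u) (Inr j)" using j unfolding bip_adj_def by auto
        then show "j' = j" using v(2) Inl by blast
      qed
      then show ?thesis using that j by blast
    next
      case (Inr j)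
      from v(1) obtain w where "bip_adj E (Inr j) w" using Inr by auto
      then obtain u where u: "w = Inl u" "(u,j) \<in> E" unfolding bip_adj_def by auto
      have "\<forall>u'. (u',j)\<in>E \<longrightarrow> u'=u"
      proof (intro allI impI)
        fix u' assume "(u',j) \<in> E"
        then have "bip_adj E (Inr j) (Inl u')" "bip_adj E (Inr j) (Inl u)" using u unfolding bip_adj_def by auto
        then show "u' = u" using v(2) Inr by blast
      qed
      then show ?thesis using that u by blast
    qed
    define E' where "E' = E - {(u,j)}"
    have E'sub: "E' \<subset> E" using uj E'_def by auto
    have cardE: "card E = card E' + 1" unfolding E'_def using card_rm[OF _ uj] by simp
    have uF: "u \<in> fst ` E" and jC: "j \<in> snd ` E" using uj by force+
    have uV: "Inl u \<in> VV E" and jV: "Inr j \<in> VV E" using uF jC unfolding VV_def by auto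
    have cuj: "bip_connected E (Inl u) (Inr j)" using conn_edge[OF uj] .
    have hu_of: "Inl u \<in> S" if uL: "\<forall>j'. (u,j')\<in>E \<longrightarrow> j'=j"
    proof (rule ccontr)
      assume "Inl u \<notin> S"
      then obtain j1 j2 where "j1 \<noteq> j2" "(u,j1)\<in>E" "(u,j2)\<in>E" using less.prems(2) uF unfolding HH1_def by blast
      then show False using uL by blast
    qed
    have notboth: "\<not> (Inl u \<in> S \<and> Inr j \<in> S)"
    proof
      assume "Inl u \<in> S \<and> Inr j \<in> S"
      then have "Inl u = (Inr j :: 'f + 'd)" using less.prems(3) uV jV cuj unfolding HH2_def by blast
      then show False by simp
    qed
    consider (I) "\<forall>j'. (u,j')\<in>E \<longrightarrow> j'=j" "\<forall>u'. (u',j)\<in>E \<longrightarrow> u'=u"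
      | (II) "\<forall>j'. (u,j')\<in>E \<longrightarrow> j'=j" "\<not> (\<forall>u'. (u',j)\<in>E \<longrightarrow> u'=u)"
      | (III) "\<forall>u'. (u',j)\<in>E \<longrightarrow> u'=u" "\<not> (\<forall>j'. (u,j')\<in>E \<longrightarrow> j'=j)"
      using lf by blast
    then show ?thesis
    proof cases
      case I
      have hu: "Inl u \<in> S" using hu_of I(1) .
      have hj: "Inr j \<notin> S" using hu notboth by blast
      have f': "fst ` E' = fst ` E - {u}" unfolding E'_def using I(1) by force
      have s': "snd ` E' = snd ` E - {j}" unfolding E'_def using I(2) by force
      have h1: "HH1 E' S" unfolding HH1_def
      proof (intro ballI impI)
        fix i assume i: "i \<in> fst ` E'" "Inl i \<notin> S"
        then have "i \<noteq> u" using hu by auto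
        obtain j1 j2 where "j1 \<noteq> j2" "(i,j1)\<in>E" "(i,j2)\<in>E"
          using less.prems(2) i f' unfolding HH1_def by auto
        then show "\<exists>j1 j2. j1 \<noteq> j2 \<and> (i,j1)\<in>E' \<and> (i,j2)\<in>E'" using \<open>i \<noteq> u\<close> unfolding E'_def by blast
      qed
      have h2: "HH2 E' S" using HH2_mono[OF less.prems(3)] E'sub by blast
      have ih: "cA E' S \<and> cB E' S" using IH[OF E'sub h1 h2] .
      have c1: "card (fst`E) = card (fst`E - {u}) + 1" using card_rm[OF _ uF] by simp
      have c2: "card (snd`E) = card (snd`E - {j}) + 1" using card_rm[OF _ jC] by simp
      have c3: "(snd`E - {j}) \<inter> {j. Inr j \<in> S} = snd`E \<inter> {j. Inr j \<in> S}" using hj by auto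
      have c4': "(fst`E - {u}) \<inter> {i. Inl i \<in> S} = (fst`E \<inter> {i. Inl i \<in> S}) - {u}" by auto
      have c4: "card (fst`E \<inter> {i. Inl i \<in> S}) = card ((fst`E - {u}) \<inter> {i. Inl i \<in> S}) + 1"
        unfolding c4' using card_rm[of "fst`E \<inter> {i. Inl i \<in> S}" u] uF hu by simp
      show ?thesis using ih c1 c2 c4 cardE unfolding cA_def cB_def f' s' c3 by linarith
    next
      case II
      have hu: "Inl u \<in> S" using hu_of II(1) .
      have hj: "Inr j \<notin> S" using hu notboth by blast
      obtain u2 where u2: "(u2,j) \<in> E" "u2 \<noteq> u" using II(2) by blast
      define S' where "S' = (S - {Inl u}) \<union> {Inr j}"
      have f': "fst ` E' = fst ` E - {u}" unfolding E'_def using II(1) by force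
      have s': "snd ` E' = snd ` E" unfolding E'_def using snd_rm[OF u2] .
      have h1: "HH1 E' S'" unfolding HH1_def
      proof (intro ballI impI)
        fix i assume i: "i \<in> fst ` E'" "Inl i \<notin> S'"
        then have "i \<noteq> u" using f' by auto
        then have "Inl i \<notin> S" using i unfolding S'_def by auto
        obtain j1 j2 where "j1 \<noteq> j2" "(i,j1)\<in>E" "(i,j2)\<in>E"
          using less.prems(2) i f' \<open>Inl i \<notin> S\<close> unfolding HH1_def by auto
        then show "\<exists>j1 j2. j1 \<noteq> j2 \<and> (i,j1)\<in>E' \<and> (i,j2)\<in>E'" using \<open>i \<noteq> u\<close> unfolding E'_def by blast
      qed
      have h2: "HH2 E' S'" unfolding S'_def
      proof (rule HH2_swap[OF less.prems(3)])
        show "E' \<subseteq> E" using E'sub by blast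
        show "Inl u \<in> S" by fact
        show "Inl u \<in> VV E" by fact
        show "Inl u \<notin> VV E'" unfolding VV_def using f' by auto
        show "Inr j \<in> VV E'" unfolding VV_def using s' jC by auto
        show "bip_connected E (Inl u) (Inr j)" by fact
      qed
      have ih: "cA E' S' \<and> cB E' S'" using IH[OF E'sub h1 h2] .
      have sf: "{i. Inl i \<in> S'} = {i. Inl i \<in> S} - {u}" unfolding S'_def by auto
      have sc: "{j'. Inr j' \<in> S'} = insert j {j'. Inr j' \<in> S}" unfolding S'_def by auto
      have c1: "card (fst`E) = card (fst`E - {u}) + 1" using card_rm[OF _ uF] by simp
      have c4': "(fst`E - {u}) \<inter> ({i. Inl i \<in> S} - {u}) = (fst`E \<inter> {i. Inl i \<in> S}) - {u}" by auto
      have c4: "card (fst`E \<inter> {i. Inl i \<in> S}) = card ((fst`E - {u}) \<inter> ({i. Inl i \<in> S} - {u})) + 1"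
        unfolding c4' using card_rm[of "fst`E \<inter> {i. Inl i \<in> S}" u] uF hu by simp
      have c5': "snd`E \<inter> insert j {j'. Inr j' \<in> S} = insert j (snd`E \<inter> {j'. Inr j' \<in> S})" using jC by auto
      have c5: "card (snd`E \<inter> insert j {j'. Inr j' \<in> S}) = card (snd`E \<inter> {j'. Inr j' \<in> S}) + 1"
        unfolding c5' using hj by (subst card_insert_disjoint) auto
      show ?thesis using ih c1 c4 c5 cardE unfolding cA_def cB_def f' s' sf sc by linarith
    next
      case III
      obtain j2 where j2: "(u,j2) \<in> E" "j2 \<noteq> j" using III(2) by blast
      have f': "fst ` E' = fst ` E" unfolding E'_def using fst_rm[OF j2] .
      have s': "snd ` E' = snd ` E - {j}" unfolding E'_def using III(1) by force
      have c2: "card (snd`E) = card (snd`E - {j}) + 1" using card_rm[OF _ jC] by simp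
      have h1gen: "\<exists>j1 j2. j1 \<noteq> j2 \<and> (i,j1)\<in>E' \<and> (i,j2)\<in>E'"
        if a1: "i \<in> fst ` E" and a2: "Inl i \<notin> S" and a3: "i \<noteq> u" for i
      proof -
        obtain j1 j2 where "j1 \<noteq> j2" "(i,j1)\<in>E" "(i,j2)\<in>E"
          using less.prems(2) a1 a2 unfolding HH1_def by blast
        then show ?thesis using \<open>i \<noteq> u\<close> unfolding E'_def by blast
      qed
      show ?thesis
      proof (cases "Inr j \<in> S")
        case True
        have hu: "Inl u \<notin> S" using True notboth by blast
        define S' where "S' = (S - {Inr j}) \<union> {Inl u}"
        have h1: "HH1 E' S'" unfolding HH1_def
        proof (intro ballI impI)
          fix i assume i: "i \<in> fst ` E'" "Inl i \<notin> S'"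
          then have "i \<noteq> u" "Inl i \<notin> S" unfolding S'_def by auto
          then show "\<exists>j1 j2. j1 \<noteq> j2 \<and> (i,j1)\<in>E' \<and> (i,j2)\<in>E'" using h1gen i f' by auto
        qed
        have h2: "HH2 E' S'" unfolding S'_def
        proof (rule HH2_swap[OF less.prems(3)])
          show "E' \<subseteq> E" using E'sub by blast
          show "Inr j \<in> S" by fact
          show "Inr j \<in> VV E" by fact
          show "Inr j \<notin> VV E'" unfolding VV_def using s' by auto
          show "Inl u \<in> VV E'" unfolding VV_def using f' uF by auto
          show "bip_connected E (Inr j) (Inl u)" using conn_sym[OF cuj] .
        qed
        have ih: "cA E' S' \<and> cB E' S'" using IH[OF E'sub h1 h2] .
        have sf: "{i. Inl i \<in> S'} = insert u {i. Inl i \<in> S}" unfolding S'_def by auto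
        have sc: "{j'. Inr j' \<in> S'} = {j'. Inr j' \<in> S} - {j}" unfolding S'_def by auto
        have c4': "fst`E \<inter> insert u {i. Inl i \<in> S} = insert u (fst`E \<inter> {i. Inl i \<in> S})" using uF by auto
        have c4: "card (fst`E \<inter> insert u {i. Inl i \<in> S}) = card (fst`E \<inter> {i. Inl i \<in> S}) + 1"
          unfolding c4' using hu by (subst card_insert_disjoint) auto
        have c5': "(snd`E - {j}) \<inter> ({j'. Inr j' \<in> S} - {j}) = (snd`E \<inter> {j'. Inr j' \<in> S}) - {j}" by auto
        have c5: "card (snd`E \<inter> {j'. Inr j' \<in> S}) = card ((snd`E - {j}) \<inter> ({j'. Inr j' \<in> S} - {j})) + 1"
          unfolding c5' using card_rm[of "snd`E \<inter> {j'. Inr j' \<in> S}" j] jC True by simp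
        show ?thesis using ih c2 c4 c5 cardE unfolding cA_def cB_def f' s' sf sc by linarith
      next
        case hj: False
        have c3: "(snd`E - {j}) \<inter> {j. Inr j \<in> S} = snd`E \<inter> {j. Inr j \<in> S}" using hj by auto
        consider (b) "Inl u \<in> S" | (c) "Inl u \<notin> S" "\<exists>j3. (u,j3) \<in> E \<and> j3 \<noteq> j \<and> j3 \<noteq> j2"
          | (d) "Inl u \<notin> S" "\<forall>j3. (u,j3) \<in> E \<longrightarrow> j3 = j \<or> j3 = j2" by blast
        then show ?thesis
        proof cases
          case b
          have h1: "HH1 E' S" unfolding HH1_def
          proof (intro ballI impI)
            fix i assume i: "i \<in> fst ` E'" "Inl i \<notin> S"
            then have "i \<noteq> u" using b by auto
            then show "\<exists>j1 j2. j1 \<noteq> j2 \<and> (i,j1)\<in>E' \<and> (i,j2)\<in>E'" using h1gen i f' by auto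
          qed
          have h2: "HH2 E' S" using HH2_mono[OF less.prems(3)] E'sub by blast
          have ih: "cA E' S \<and> cB E' S" using IH[OF E'sub h1 h2] .
          show ?thesis using ih c2 cardE unfolding cA_def cB_def f' s' c3 by linarith
        next
          case c
          then obtain j3 where j3: "(u,j3) \<in> E" "j3 \<noteq> j" "j3 \<noteq> j2" by blast
          have h1: "HH1 E' S" unfolding HH1_def
          proof (intro ballI impI)
            fix i assume i: "i \<in> fst ` E'" "Inl i \<notin> S"
            show "\<exists>j1 j2. j1 \<noteq> j2 \<and> (i,j1)\<in>E' \<and> (i,j2)\<in>E'"
            proof (cases "i = u")
              case True
              then show ?thesis using j2 j3 unfolding E'_def by blast
            next
              case False
              then show ?thesis using h1gen i f' by auto
            qed
          qed
          have h2: "HH2 E' S" using HH2_mono[OF less.prems(3)] E'sub by blast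
          have ih: "cA E' S \<and> cB E' S" using IH[OF E'sub h1 h2] .
          show ?thesis using ih c2 cardE unfolding cA_def cB_def f' s' c3 by linarith
        next
          case d
          define E'' where "E'' = E - {(u,j),(u,j2)}"
          have E''sub: "E'' \<subset> E" using uj E''_def by auto
          have cardE'': "card E = card E'' + 2"
          proof -
            have "card E = card (E - {(u,j)}) + 1" using card_rm[OF _ uj] by simp
            moreover have "card (E - {(u,j)}) = card (E - {(u,j)} - {(u,j2)}) + 1"
              using card_rm[of "E - {(u,j)}" "(u,j2)"] j2 by simp
            moreover have "E - {(u,j)} - {(u,j2)} = E''" unfolding E''_def by auto
            ultimately show ?thesis by simp
          qed
          have f'': "fst ` E'' = fst ` E - {u}"
          proof
            show "fst ` E'' \<subseteq> fst ` E - {u}"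
            proof
              fix a assume "a \<in> fst ` E''"
              then obtain b where ab: "(a,b) \<in> E''" by force
              then have "(a,b) \<in> E" "(a,b) \<noteq> (u,j)" "(a,b) \<noteq> (u,j2)" unfolding E''_def by auto
              then have "a \<noteq> u" using d(2) by blast
              then show "a \<in> fst ` E - {u}" using \<open>(a,b) \<in> E\<close> by force
            qed
            show "fst ` E - {u} \<subseteq> fst ` E''"
            proof
              fix a assume "a \<in> fst ` E - {u}"
              then obtain b where "(a,b) \<in> E" "a \<noteq> u" by force
              then have "(a,b) \<in> E''" unfolding E''_def by auto
              then show "a \<in> fst ` E''" by force
            qed
          qed
          have h1: "HH1 E'' S" unfolding HH1_def
          proof (intro ballI impI)
            fix i assume i: "i \<in> fst ` E''" "Inl i \<notin> S"
            then have "i \<noteq> u" "i \<in> fst ` E" using f'' by auto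
            obtain j1 j2 where "j1 \<noteq> j2" "(i,j1)\<in>E" "(i,j2)\<in>E"
              using less.prems(2) i \<open>i \<in> fst ` E\<close> unfolding HH1_def by auto
            then show "\<exists>j1 j2. j1 \<noteq> j2 \<and> (i,j1)\<in>E'' \<and> (i,j2)\<in>E''" using \<open>i \<noteq> u\<close> unfolding E''_def by blast
          qed
          have h2: "HH2 E'' S" using HH2_mono[OF less.prems(3)] E''sub by blast
          have ih: "cA E'' S \<and> cB E'' S" using IH[OF E''sub h1 h2] .
          have c1: "card (fst`E) = card (fst`E - {u}) + 1" using card_rm[OF _ uF] by simp
          have c6: "(fst`E - {u}) \<inter> {i. Inl i \<in> S} = fst`E \<inter> {i. Inl i \<in> S}" using d(1) by auto
          show ?thesis
          proof (cases "\<exists>u'. (u',j2) \<in> E \<and> u' \<noteq> u")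
            case True
            then obtain u' where u': "(u',j2) \<in> E" "u' \<noteq> u" by blast
            have s'': "snd ` E'' = snd ` E - {j}"
            proof
              show "snd ` E'' \<subseteq> snd ` E - {j}"
              proof
                fix b assume "b \<in> snd ` E''"
                then obtain a where ab: "(a,b) \<in> E''" by force
                then have "(a,b) \<in> E" "(a,b) \<noteq> (u,j)" unfolding E''_def by auto
                then have "b \<noteq> j" using III(1) by blast
                then show "b \<in> snd ` E - {j}" using \<open>(a,b) \<in> E\<close> by force
              qed
              show "snd ` E - {j} \<subseteq> snd ` E''"
              proof
                fix b assume b: "b \<in> snd ` E - {j}"
                show "b \<in> snd ` E''"
                proof (cases "b = j2")
                  case True
                  then have "(u',b) \<in> E''" using u' unfolding E''_def by auto
                  then show ?thesis by force
                next
                  case False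
                  obtain a where "(a,b) \<in> E" "b \<noteq> j" using b by force
                  then have "(a,b) \<in> E''" using False unfolding E''_def by auto
                  then show ?thesis by force
                qed
              qed
            qed
            show ?thesis using ih c1 c2 cardE'' unfolding cA_def cB_def f'' s'' c3 c6 by linarith
          next
            case False
            have s'': "snd ` E'' = snd ` E - {j} - {j2}"
            proof
              show "snd ` E'' \<subseteq> snd ` E - {j} - {j2}"
              proof
                fix b assume "b \<in> snd ` E''"
                then obtain a where ab: "(a,b) \<in> E''" by force
                then have "(a,b) \<in> E" "(a,b) \<noteq> (u,j)" "(a,b) \<noteq> (u,j2)" unfolding E''_def by auto
                then have "b \<noteq> j" "b \<noteq> j2" using III(1) False by blast+
                then show "b \<in> snd ` E - {j} - {j2}" using \<open>(a,b) \<in> E\<close> by force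
              qed
              show "snd ` E - {j} - {j2} \<subseteq> snd ` E''"
              proof
                fix b assume b: "b \<in> snd ` E - {j} - {j2}"
                obtain a where "(a,b) \<in> E" using b by force
                then have "(a,b) \<in> E''" using b unfolding E''_def by auto
                then show "b \<in> snd ` E''" by force
              qed
            qed
            have j2C: "j2 \<in> snd ` E - {j}" using j2 by force
            have c7: "card (snd`E - {j}) = card (snd`E - {j} - {j2}) + 1"
              using card_rm[OF _ j2C] by simp
            have sub7: "snd`E \<inter> {j. Inr j \<in> S} \<subseteq> insert j2 ((snd`E - {j} - {j2}) \<inter> {j. Inr j \<in> S})"
              using hj by auto
            have c8: "card (snd`E \<inter> {j. Inr j \<in> S}) \<le> card ((snd`E - {j} - {j2}) \<inter> {j. Inr j \<in> S}) + 1"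
            proof -
              have "card (insert j2 ((snd`E - {j} - {j2}) \<inter> {j. Inr j \<in> S})) \<le> card ((snd`E - {j} - {j2}) \<inter> {j. Inr j \<in> S}) + 1"
                by (simp add: card_insert_if)
              then show ?thesis using card_mono[OF _ sub7] by simp
            qed
            show ?thesis using ih c1 c2 c7 c8 cardE'' unfolding cA_def cB_def f'' s'' c6 by linarith
          qed
        qed
      qed
    qed
  qed
qed


lemma load_le_s:
  assumes feas: "(x,y) \<in> ckflu_feasible d s k"
  shows "(\<Sum>j\<in>UNIV. x $ (i, j)) \<le> real s"
proof -
  have "y $ i = 0 \<or> y $ i = 1" "(\<Sum>j\<in>UNIV. x $ (i, j)) \<le> real s * y $ i"
    using feas by (auto simp: ckflu_feasible_def)
  then show ?thesis by auto
qed

lemma nonfrac_two: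
  fixes x :: "real^('f::finite \<times> 'd::finite)" and y :: "real^'f"
  assumes feas: "(x,y) \<in> ckflu_feasible d s k" and iH: "i \<in> fst ` untight_edges s x"
    and nf: "\<not> (0 < (\<Sum>j\<in>UNIV. x $ (i, j)) \<and> (\<Sum>j\<in>UNIV. x $ (i, j)) < real s)"
  shows "\<exists>j1 j2. j1 \<noteq> j2 \<and> (i,j1) \<in> untight_edges s x \<and> (i,j2) \<in> untight_edges s x"
proof (rule ccontr)
  assume nt: "\<not> ?thesis"
  from iH obtain j where j: "(i,j) \<in> untight_edges s x" by force
  then have xj: "0 < x $ (i,j)" "x $ (i,j) < real s" unfolding untight_edges_def by auto
  have x0: "\<forall>a b. x $ (a,b) \<ge> 0" using feas by (auto simp: ckflu_feasible_def)
  have le: "(\<Sum>j'\<in>A. x $ (i, j')) \<le> (\<Sum>j\<in>UNIV. x $ (i, j))" for A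
    using x0 by (intro sum_mono2) auto
  have "x $ (i,j) \<le> (\<Sum>j\<in>UNIV. x $ (i, j))" using le[of "{j}"] by simp
  then have ls: "(\<Sum>j\<in>UNIV. x $ (i, j)) = real s" using nf xj load_le_s[OF feas, of i] by linarith
  have z: "x $ (i,j') = 0" if "j' \<noteq> j" for j'
  proof (rule ccontr)
    assume "x $ (i,j') \<noteq> 0"
    moreover have "x $ (i,j') \<ge> 0" using x0 by simp
    ultimately have p: "x $ (i,j') > 0" by linarith
    show False
    proof (cases "x $ (i,j') < real s")
      case True
      then have "(i,j') \<in> untight_edges s x" using p unfolding untight_edges_def by simp
      then show False using nt j that by blast
    next
      case False
      have "(\<Sum>j'\<in>{j,j'}. x $ (i, j')) = x $ (i,j) + x $ (i,j')" using that by simp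
      then show False using le[of "{j,j'}"] False xj ls by linarith
    qed
  qed
  have "(\<Sum>j'\<in>UNIV. x $ (i, j')) = x $ (i,j) + (\<Sum>j'\<in>UNIV - {j}. x $ (i, j'))"
    by (simp add: sum.remove)
  also have "(\<Sum>j'\<in>UNIV - {j}. x $ (i, j')) = 0" using z by (intro sum.neutral) auto
  finally show False using ls xj by simp
qed

theorem mainTheorem7:
  fixes d :: "'d::finite \<Rightarrow> nat" and s k :: nat
    and x :: "real^('f::finite \<times> 'd)" and y :: "real^'f"
  assumes "s > 0" and "k \<ge> 1"
    and vertex: "(x, y) extreme_point_of (convex hull (ckflu_feasible d s k))"
  shows "bip_acyclic (assoc_edges x)
    \<and> (\<forall>i1 i2. i1 \<in> fst ` untight_edges s x \<and> i2 \<in> fst ` untight_edges s x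
            \<and> 0 < (\<Sum>j\<in>UNIV. x $ (i1, j)) \<and> (\<Sum>j\<in>UNIV. x $ (i1, j)) < real s
            \<and> 0 < (\<Sum>j\<in>UNIV. x $ (i2, j)) \<and> (\<Sum>j\<in>UNIV. x $ (i2, j)) < real s
            \<and> bip_connected (untight_edges s x) (Inl i1) (Inl i2)
            \<longrightarrow> i1 = i2)
    \<and> card (fst ` untight_edges s x) \<le> CARD('d)
    \<and> card (untight_edges s x) \<le> 2 * CARD('d) - 1"
proof -
  have feas: "(x,y) \<in> ckflu_feasible d s k" using extreme_point_of_convex_hull[OF vertex] .
  have a: "bip_acyclic (assoc_edges x)" by (rule part_a[OF vertex])
  have b: "\<forall>i1 i2. i1 \<in> fst ` untight_edges s x \<and> i2 \<in> fst ` untight_edges s x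
            \<and> 0 < (\<Sum>j\<in>UNIV. x $ (i1, j)) \<and> (\<Sum>j\<in>UNIV. x $ (i1, j)) < real s
            \<and> 0 < (\<Sum>j\<in>UNIV. x $ (i2, j)) \<and> (\<Sum>j\<in>UNIV. x $ (i2, j)) < real s
            \<and> bip_connected (untight_edges s x) (Inl i1) (Inl i2)
            \<longrightarrow> i1 = i2"
  proof (intro allI impI)
    fix i1 i2 assume h: "i1 \<in> fst ` untight_edges s x \<and> i2 \<in> fst ` untight_edges s x
            \<and> 0 < (\<Sum>j\<in>UNIV. x $ (i1, j)) \<and> (\<Sum>j\<in>UNIV. x $ (i1, j)) < real s
            \<and> 0 < (\<Sum>j\<in>UNIV. x $ (i2, j)) \<and> (\<Sum>j\<in>UNIV. x $ (i2, j)) < real s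
            \<and> bip_connected (untight_edges s x) (Inl i1) (Inl i2)"
    show "i1 = i2"
    proof (rule ccontr)
      assume "i1 \<noteq> i2"
      then show False using part_b[OF vertex, of i1 i2] h by blast
    qed
  qed
  define H where "H = untight_edges s x"
  have Hsub: "H \<subseteq> assoc_edges x" unfolding H_def untight_edges_def assoc_edges_def by auto
  have acH: "bip_acyclic H" by (rule acyc_mono[OF Hsub a])
  have cC: "card (snd ` H) \<le> CARD('d)" by (rule card_mono) auto
  define Frac where "Frac = {i \<in> fst ` H. 0 < (\<Sum>j\<in>UNIV. x $ (i, j)) \<and> (\<Sum>j\<in>UNIV. x $ (i, j)) < real s}"
  have c: "card (fst ` H) \<le> CARD('d) \<and> card H \<le> 2 * CARD('d) - 1"
  proof (cases "Frac = {}")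
    case False
    define S :: "('f + 'd) set" where "S = Inl ` Frac"
    have h1: "HH1 H S" unfolding HH1_def
    proof (intro ballI impI)
      fix i assume i: "i \<in> fst ` H" "Inl i \<notin> S"
      then have "i \<notin> Frac" unfolding S_def by auto
      then show "\<exists>j1 j2. j1 \<noteq> j2 \<and> (i,j1)\<in>H \<and> (i,j2)\<in>H"
        using nonfrac_two[OF feas, of i] i unfolding Frac_def H_def by blast
    qed
    have h2: "HH2 H S" unfolding HH2_def
    proof (intro allI impI)
      fix p q assume "p \<in> S" "q \<in> S" "p \<in> VV H" "q \<in> VV H" "bip_connected H p q"
      then obtain i1 i2 where pq: "p = Inl i1" "q = Inl i2" "i1 \<in> Frac" "i2 \<in> Frac" "bip_connected H (Inl i1) (Inl i2)"
        unfolding S_def by blast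
      have "i1 = i2" using b[rule_format, of i1 i2] pq(3,4,5) unfolding Frac_def H_def by blast
      then show "p = q" using pq by simp
    qed
    have cc: "cA H S \<and> cB H S" by (rule count_main[OF acH h1 h2])
    have sc: "{j. Inr j \<in> S} = {}" unfolding S_def by auto
    have sf: "fst ` H \<inter> {i. Inl i \<in> S} = Frac" unfolding S_def Frac_def by auto
    have "card Frac \<ge> 1" using False by (simp add: Suc_le_eq card_gt_0_iff)
    then show ?thesis using cc cC unfolding cA_def cB_def sc sf by (simp; linarith)
  next
    case True
    show ?thesis
    proof (cases "H = {}")
      case True then show ?thesis by simp
    next
      case False
      then obtain j0 where j0: "j0 \<in> snd ` H" by auto
      define S where "S = {Inr j0 :: 'f + 'd}"
      have h1: "HH1 H S" unfolding HH1_def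
      proof (intro ballI impI)
        fix i assume i: "i \<in> fst ` H" "Inl i \<notin> S"
        then have "i \<notin> Frac" using True by auto
        then show "\<exists>j1 j2. j1 \<noteq> j2 \<and> (i,j1)\<in>H \<and> (i,j2)\<in>H"
          using nonfrac_two[OF feas, of i] i unfolding Frac_def H_def by blast
      qed
      have h2: "HH2 H S" unfolding HH2_def S_def by auto
      have cc: "cA H S \<and> cB H S" by (rule count_main[OF acH h1 h2])
      have sc: "snd ` H \<inter> {j. Inr j \<in> S} = {j0}" unfolding S_def using j0 by auto
      have sf: "fst ` H \<inter> {i. Inl i \<in> S} = {}" unfolding S_def by auto
      show ?thesis using cc cC unfolding cA_def cB_def sc sf by (simp; linarith)
    qed
  qed
  show ?thesis using a b c unfolding H_def by blast
qed

end
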